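(* Let $(\{T_g\}_{g\in G},\{\gamma_{g,h}\}_{g,h\in G},u)$ be a (global) action of a group $G$ on a (strict) monoidal category $\mathcal{C}$, and let $X$ be an object of $\mathcal{C}$. (a) Given a family $\{\sigma^X_g\}_{g\in G}$ making $(X,\{\sigma^X_g\})$ a partially $G$-equivariant object, there is a family $\{\theta_g\}_{g\in G}$ making $(X,\{\theta_g\})$ a (global) $G$-equivariant object. (b) Conversely, given a family $\{\theta_g\}_{g\in G}$ making $(X,\{\theta_g\})$ a $G$-equivariant object, there is a family $\{\sigma^X_g\}_{g\in G}$ making $(X,\{\sigma^X_g\})$ a partially $G$-equivariant object.
   Context: A (global) action of $G$ (unit $e$) on the monoidal category $\mathcal{C}$ consists of monoidal auto-equivalences $(T_g,J^g,J^{g0})$ of $\mathcal{C}$ (with $J^g\colon T_g(-)\otimes T_g(-)\Rightarrow T_g(-\otimes-)$ a natural isomorphism satisfying the hexagon axiom and $J^{g0}\colon\mathbb{1}\to T_g(\mathbb{1})$ an isomorphism compatible with the unit constraints), monoidal natural isomorphisms $\gamma_{g,h}\colon T_gT_h\Rightarrow T_{gh}$ and $u\colon\mathrm{Id}_{\mathcal{C}}\Rightarrow T_e$, such that $(\gamma_{gh,k})_X\circ(\gamma_{g,h})_{T_k(X)}=(\gamma_{g,hk})_X\circ T_g((\gamma_{h,k})_X)$, and $u_{T_g(X)}$, $(\gamma_{e,g})_X$ are mutually inverse, as are $T_g(u_X)$, $(\gamma_{g,e})_X$. A $G$-equivariant object is a pair $(X,\{\theta_g\}_{g\in G})$ with isomorphisms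 $\theta_g\colon T_g(X)\to X$ such that $\theta_{gh}\circ(\gamma_{g,h})_X=\theta_g\circ T_g(\theta_h)$ for all $g,h$ and $\theta_e\circ u_X=\mathrm{id}_X$. A partially $G$-equivariant object is a pair $(X,\{\sigma^X_g\}_{g\in G})$ with natural isomorphisms $\sigma^X_g\colon T_g(X\otimes-)\Rightarrow X\otimes T_g(-)$ such that for all $g,h\in G$ and objects $Y$: $(\sigma^X_{gh})_Y\circ(\gamma_{g,h})_{X\otimes Y}=(X\otimes(\gamma_{g,h})_Y)\circ(\sigma^X_g)_{T_h(Y)}\circ T_g((\sigma^X_h)_Y)$, and $(\sigma^X_e)_Y\circ u_{X\otimes Y}=X\otimes u_Y$. *)

theory Defs
  imports "HOL-Algebra.Group"
begin

text \<open>Strict monoidal categories, presented via objects, hom-sets, composition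
  (cmp g f = g after f), identities, and the tensor product on objects and morphisms.\<close>

record ('o, 'm) smcat =
  obj  :: "'o set"
  hom  :: "'o \<Rightarrow> 'o \<Rightarrow> 'm set"
  cmp  :: "'m \<Rightarrow> 'm \<Rightarrow> 'm"
  idm  :: "'o \<Rightarrow> 'm"
  tns  :: "'o \<Rightarrow> 'o \<Rightarrow> 'o"
  tnsm :: "'m \<Rightarrow> 'm \<Rightarrow> 'm"
  unt  :: "'o"

definition is_category :: "('o, 'm, 'x) smcat_scheme \<Rightarrow> bool" where
  "is_category C \<longleftrightarrow>
     (\<forall>a b f. f \<in> hom C a b \<longrightarrow> a \<in> obj C \<and> b \<in> obj C) \<and>
     (\<forall>a \<in> obj C. idm C a \<in> hom C a a) \<and>
     (\<forall>a b c f g. f \<in> hom C a b \<longrightarrow> g \<in> hom C b c \<longrightarrow> cmp C g f \<in> hom C a c) \<and>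
     (\<forall>a b f. f \<in> hom C a b \<longrightarrow> cmp C (idm C b) f = f \<and> cmp C f (idm C a) = f) \<and>
     (\<forall>a b c d f g h. f \<in> hom C a b \<longrightarrow> g \<in> hom C b c \<longrightarrow> h \<in> hom C c d \<longrightarrow>
        cmp C h (cmp C g f) = cmp C (cmp C h g) f)"

definition is_strict_monoidal :: "('o, 'm, 'x) smcat_scheme \<Rightarrow> bool" where
  "is_strict_monoidal C \<longleftrightarrow> is_category C \<and>
     unt C \<in> obj C \<and>
     (\<forall>a \<in> obj C. \<forall>b \<in> obj C. tns C a b \<in> obj C) \<and>
     (\<forall>a b c d f g. f \<in> hom C a b \<longrightarrow> g \<in> hom C c d \<longrightarrow>
        tnsm C f g \<in> hom C (tns C a c) (tns C b d)) \<and>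
     (\<forall>a \<in> obj C. \<forall>b \<in> obj C. tnsm C (idm C a) (idm C b) = idm C (tns C a b)) \<and>
     (\<forall>a b c a' b' c' f f' g g'. f \<in> hom C a b \<longrightarrow> f' \<in> hom C b c \<longrightarrow>
        g \<in> hom C a' b' \<longrightarrow> g' \<in> hom C b' c' \<longrightarrow>
        tnsm C (cmp C f' f) (cmp C g' g) = cmp C (tnsm C f' g') (tnsm C f g)) \<and>
     (\<forall>a \<in> obj C. \<forall>b \<in> obj C. \<forall>c \<in> obj C. tns C (tns C a b) c = tns C a (tns C b c)) \<and>
     (\<forall>a \<in> obj C. tns C (unt C) a = a \<and> tns C a (unt C) = a) \<and>
     (\<forall>a b c d e k f g h. f \<in> hom C a b \<longrightarrow> g \<in> hom C c d \<longrightarrow> h \<in> hom C e k \<longrightarrow>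
        tnsm C (tnsm C f g) h = tnsm C f (tnsm C g h)) \<and>
     (\<forall>a b f. f \<in> hom C a b \<longrightarrow>
        tnsm C (idm C (unt C)) f = f \<and> tnsm C f (idm C (unt C)) = f)"

definition is_iso :: "('o, 'm, 'x) smcat_scheme \<Rightarrow> 'm \<Rightarrow> 'o \<Rightarrow> 'o \<Rightarrow> bool" where
  "is_iso C f a b \<longleftrightarrow> f \<in> hom C a b \<and>
     (\<exists>g \<in> hom C b a. cmp C g f = idm C a \<and> cmp C f g = idm C b)"

definition is_functor :: "('o, 'm, 'x) smcat_scheme \<Rightarrow> ('o \<Rightarrow> 'o) \<Rightarrow> ('m \<Rightarrow> 'm) \<Rightarrow> bool" where
  "is_functor C F Fm \<longleftrightarrow>
     (\<forall>a \<in> obj C. F a \<in> obj C) \<and>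
     (\<forall>a b f. f \<in> hom C a b \<longrightarrow> Fm f \<in> hom C (F a) (F b)) \<and>
     (\<forall>a \<in> obj C. Fm (idm C a) = idm C (F a)) \<and>
     (\<forall>a b c f g. f \<in> hom C a b \<longrightarrow> g \<in> hom C b c \<longrightarrow> Fm (cmp C g f) = cmp C (Fm g) (Fm f))"

definition is_nat_trans ::
  "('o, 'm, 'x) smcat_scheme \<Rightarrow> ('o \<Rightarrow> 'o) \<Rightarrow> ('m \<Rightarrow> 'm) \<Rightarrow> ('o \<Rightarrow> 'o) \<Rightarrow> ('m \<Rightarrow> 'm)
     \<Rightarrow> ('o \<Rightarrow> 'm) \<Rightarrow> bool" where
  "is_nat_trans C F Fm G Gm \<eta> \<longleftrightarrow>
     (\<forall>a \<in> obj C. \<eta> a \<in> hom C (F a) (G a)) \<and>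
     (\<forall>a b f. f \<in> hom C a b \<longrightarrow> cmp C (\<eta> b) (Fm f) = cmp C (Gm f) (\<eta> a))"

definition is_nat_iso ::
  "('o, 'm, 'x) smcat_scheme \<Rightarrow> ('o \<Rightarrow> 'o) \<Rightarrow> ('m \<Rightarrow> 'm) \<Rightarrow> ('o \<Rightarrow> 'o) \<Rightarrow> ('m \<Rightarrow> 'm)
     \<Rightarrow> ('o \<Rightarrow> 'm) \<Rightarrow> bool" where
  "is_nat_iso C F Fm G Gm \<eta> \<longleftrightarrow> is_nat_trans C F Fm G Gm \<eta> \<and>
     (\<forall>a \<in> obj C. is_iso C (\<eta> a) (F a) (G a))"

definition is_equivalence :: "('o, 'm, 'x) smcat_scheme \<Rightarrow> ('o \<Rightarrow> 'o) \<Rightarrow> ('m \<Rightarrow> 'm) \<Rightarrow> bool" where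
  "is_equivalence C F Fm \<longleftrightarrow> is_functor C F Fm \<and>
     (\<exists>S Sm \<eta> \<epsilon>. is_functor C S Sm \<and>
        is_nat_iso C (\<lambda>a. a) (\<lambda>f. f) (\<lambda>a. S (F a)) (\<lambda>f. Sm (Fm f)) \<eta> \<and>
        is_nat_iso C (\<lambda>a. F (S a)) (\<lambda>f. Fm (Sm f)) (\<lambda>a. a) (\<lambda>f. f) \<epsilon>)"

text \<open>(Strong) monoidal functors on a strict monoidal category:
  J a b : F a \<otimes> F b \<rightarrow> F (a \<otimes> b) and J0 : 1 \<rightarrow> F 1 (the associator and unitors are identities).\<close>

definition is_monoidal_functor ::
  "('o, 'm, 'x) smcat_scheme \<Rightarrow> ('o \<Rightarrow> 'o) \<Rightarrow> ('m \<Rightarrow> 'm) \<Rightarrow> ('o \<Rightarrow> 'o \<Rightarrow> 'm) \<Rightarrow> 'm \<Rightarrow> bool" where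
  "is_monoidal_functor C F Fm J J0 \<longleftrightarrow> is_functor C F Fm \<and>
     (\<forall>a \<in> obj C. \<forall>b \<in> obj C. is_iso C (J a b) (tns C (F a) (F b)) (F (tns C a b))) \<and>
     (\<forall>a a' b b' f g. f \<in> hom C a a' \<longrightarrow> g \<in> hom C b b' \<longrightarrow>
        cmp C (J a' b') (tnsm C (Fm f) (Fm g)) = cmp C (Fm (tnsm C f g)) (J a b)) \<and>
     (\<forall>a \<in> obj C. \<forall>b \<in> obj C. \<forall>c \<in> obj C.
        cmp C (J (tns C a b) c) (tnsm C (J a b) (idm C (F c))) =
        cmp C (J a (tns C b c)) (tnsm C (idm C (F a)) (J b c))) \<and>
     is_iso C J0 (unt C) (F (unt C)) \<and>
     (\<forall>a \<in> obj C. cmp C (J (unt C) a) (tnsm C J0 (idm C (F a))) = idm C (F a) \<and>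
                  cmp C (J a (unt C)) (tnsm C (idm C (F a)) J0) = idm C (F a))"

definition is_monoidal_autoequivalence ::
  "('o, 'm, 'x) smcat_scheme \<Rightarrow> ('o \<Rightarrow> 'o) \<Rightarrow> ('m \<Rightarrow> 'm) \<Rightarrow> ('o \<Rightarrow> 'o \<Rightarrow> 'm) \<Rightarrow> 'm \<Rightarrow> bool" where
  "is_monoidal_autoequivalence C F Fm J J0 \<longleftrightarrow>
     is_monoidal_functor C F Fm J J0 \<and> is_equivalence C F Fm"

definition is_monoidal_nat_iso ::
  "('o, 'm, 'x) smcat_scheme
     \<Rightarrow> ('o \<Rightarrow> 'o) \<Rightarrow> ('m \<Rightarrow> 'm) \<Rightarrow> ('o \<Rightarrow> 'o \<Rightarrow> 'm) \<Rightarrow> 'm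
     \<Rightarrow> ('o \<Rightarrow> 'o) \<Rightarrow> ('m \<Rightarrow> 'm) \<Rightarrow> ('o \<Rightarrow> 'o \<Rightarrow> 'm) \<Rightarrow> 'm
     \<Rightarrow> ('o \<Rightarrow> 'm) \<Rightarrow> bool" where
  "is_monoidal_nat_iso C F Fm JF JF0 G Gm JG JG0 \<eta> \<longleftrightarrow>
     is_nat_iso C F Fm G Gm \<eta> \<and>
     (\<forall>a \<in> obj C. \<forall>b \<in> obj C.
        cmp C (\<eta> (tns C a b)) (JF a b) = cmp C (JG a b) (tnsm C (\<eta> a) (\<eta> b))) \<and>
     cmp C (\<eta> (unt C)) JF0 = JG0"

definition is_action ::
  "('g, 'y) monoid_scheme \<Rightarrow> ('o, 'm, 'x) smcat_scheme
     \<Rightarrow> ('g \<Rightarrow> 'o \<Rightarrow> 'o) \<Rightarrow> ('g \<Rightarrow> 'm \<Rightarrow> 'm) \<Rightarrow> ('g \<Rightarrow> 'o \<Rightarrow> 'o \<Rightarrow> 'm) \<Rightarrow> ('g \<Rightarrow> 'm)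
     \<Rightarrow> ('g \<Rightarrow> 'g \<Rightarrow> 'o \<Rightarrow> 'm) \<Rightarrow> ('o \<Rightarrow> 'm) \<Rightarrow> bool" where
  "is_action G C T Tm J J0 \<gamma> u \<longleftrightarrow>
     group G \<and> is_strict_monoidal C \<and>
     (\<forall>g \<in> carrier G. is_monoidal_autoequivalence C (T g) (Tm g) (J g) (J0 g)) \<and>
     (\<forall>g \<in> carrier G. \<forall>h \<in> carrier G.
        is_monoidal_nat_iso C
          (\<lambda>a. T g (T h a)) (\<lambda>f. Tm g (Tm h f))
          (\<lambda>a b. cmp C (Tm g (J h a b)) (J g (T h a) (T h b))) (cmp C (Tm g (J0 h)) (J0 g))
          (T (g \<otimes>\<^bsub>G\<^esub> h)) (Tm (g \<otimes>\<^bsub>G\<^esub> h)) (J (g \<otimes>\<^bsub>G\<^esub> h)) (J0 (g \<otimes>\<^bsub>G\<^esub> h))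
          (\<gamma> g h)) \<and>
     is_monoidal_nat_iso C
       (\<lambda>a. a) (\<lambda>f. f) (\<lambda>a b. idm C (tns C a b)) (idm C (unt C))
       (T \<one>\<^bsub>G\<^esub>) (Tm \<one>\<^bsub>G\<^esub>) (J \<one>\<^bsub>G\<^esub>) (J0 \<one>\<^bsub>G\<^esub>) u \<and>
     (\<forall>g \<in> carrier G. \<forall>h \<in> carrier G. \<forall>k \<in> carrier G. \<forall>X \<in> obj C.
        cmp C (\<gamma> (g \<otimes>\<^bsub>G\<^esub> h) k X) (\<gamma> g h (T k X)) =
        cmp C (\<gamma> g (h \<otimes>\<^bsub>G\<^esub> k) X) (Tm g (\<gamma> h k X))) \<and>
     (\<forall>g \<in> carrier G. \<forall>X \<in> obj C.
        cmp C (\<gamma> \<one>\<^bsub>G\<^esub> g X) (u (T g X)) = idm C (T g X) \<and>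
        cmp C (u (T g X)) (\<gamma> \<one>\<^bsub>G\<^esub> g X) = idm C (T \<one>\<^bsub>G\<^esub> (T g X)) \<and>
        cmp C (\<gamma> g \<one>\<^bsub>G\<^esub> X) (Tm g (u X)) = idm C (T g X) \<and>
        cmp C (Tm g (u X)) (\<gamma> g \<one>\<^bsub>G\<^esub> X) = idm C (T g (T \<one>\<^bsub>G\<^esub> X)))"

definition is_equivariant_object ::
  "('g, 'y) monoid_scheme \<Rightarrow> ('o, 'm, 'x) smcat_scheme
     \<Rightarrow> ('g \<Rightarrow> 'o \<Rightarrow> 'o) \<Rightarrow> ('g \<Rightarrow> 'm \<Rightarrow> 'm)
     \<Rightarrow> ('g \<Rightarrow> 'g \<Rightarrow> 'o \<Rightarrow> 'm) \<Rightarrow> ('o \<Rightarrow> 'm) \<Rightarrow> 'o \<Rightarrow> ('g \<Rightarrow> 'm) \<Rightarrow> bool" where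
  "is_equivariant_object G C T Tm \<gamma> u X \<theta> \<longleftrightarrow>
     (\<forall>g \<in> carrier G. is_iso C (\<theta> g) (T g X) X) \<and>
     (\<forall>g \<in> carrier G. \<forall>h \<in> carrier G.
        cmp C (\<theta> (g \<otimes>\<^bsub>G\<^esub> h)) (\<gamma> g h X) = cmp C (\<theta> g) (Tm g (\<theta> h))) \<and>
     cmp C (\<theta> \<one>\<^bsub>G\<^esub>) (u X) = idm C X"

definition is_partially_equivariant_object ::
  "('g, 'y) monoid_scheme \<Rightarrow> ('o, 'm, 'x) smcat_scheme
     \<Rightarrow> ('g \<Rightarrow> 'o \<Rightarrow> 'o) \<Rightarrow> ('g \<Rightarrow> 'm \<Rightarrow> 'm)
     \<Rightarrow> ('g \<Rightarrow> 'g \<Rightarrow> 'o \<Rightarrow> 'm) \<Rightarrow> ('o \<Rightarrow> 'm) \<Rightarrow> 'o \<Rightarrow> ('g \<Rightarrow> 'o \<Rightarrow> 'm) \<Rightarrow> bool" where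
  "is_partially_equivariant_object G C T Tm \<gamma> u X \<sigma> \<longleftrightarrow>
     (\<forall>g \<in> carrier G.
        is_nat_iso C
          (\<lambda>Y. T g (tns C X Y)) (\<lambda>f. Tm g (tnsm C (idm C X) f))
          (\<lambda>Y. tns C X (T g Y)) (\<lambda>f. tnsm C (idm C X) (Tm g f))
          (\<sigma> g)) \<and>
     (\<forall>g \<in> carrier G. \<forall>h \<in> carrier G. \<forall>Y \<in> obj C.
        cmp C (\<sigma> (g \<otimes>\<^bsub>G\<^esub> h) Y) (\<gamma> g h (tns C X Y)) =
        cmp C (tnsm C (idm C X) (\<gamma> g h Y)) (cmp C (\<sigma> g (T h Y)) (Tm g (\<sigma> h Y)))) \<and>
     (\<forall>Y \<in> obj C. cmp C (\<sigma> \<one>\<^bsub>G\<^esub> Y) (u (tns C X Y)) = tnsm C (idm C X) (u Y))"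

end

theory Submission
  imports Defs
begin

definition invm :: "('o, 'm, 'x) smcat_scheme \<Rightarrow> 'm \<Rightarrow> 'o \<Rightarrow> 'o \<Rightarrow> 'm" where
  "invm C f a b = (SOME g. g \<in> hom C b a \<and> cmp C g f = idm C a \<and> cmp C f g = idm C b)"

locale smc = fixes C :: "('o, 'm, 'x) smcat_scheme" assumes sm: "is_strict_monoidal C"
begin

lemma cat: "is_category C" using sm[unfolded is_strict_monoidal_def, THEN conjunct1, rule_format] by blast

lemma hom_obj: "f \<in> hom C a b \<Longrightarrow> a \<in> obj C \<and> b \<in> obj C"
  using cat[unfolded is_category_def, THEN conjunct1, rule_format] by blast
lemma hom_obj1: "f \<in> hom C a b \<Longrightarrow> a \<in> obj C" using hom_obj by blast
lemma hom_obj2: "f \<in> hom C a b \<Longrightarrow> b \<in> obj C" using hom_obj by blast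
lemma id_hom[intro]: "a \<in> obj C \<Longrightarrow> idm C a \<in> hom C a a"
  using cat[unfolded is_category_def, THEN conjunct2, THEN conjunct1, rule_format] by blast
lemma cmp_hom[intro]: "f \<in> hom C a b \<Longrightarrow> g \<in> hom C b c \<Longrightarrow> cmp C g f \<in> hom C a c"
  using cat[unfolded is_category_def, THEN conjunct2, THEN conjunct2, THEN conjunct1, rule_format] by blast
lemma idl[simp]: "f \<in> hom C a b \<Longrightarrow> cmp C (idm C b) f = f"
  using cat[unfolded is_category_def, THEN conjunct2, THEN conjunct2, THEN conjunct2, THEN conjunct1, rule_format] by blast
lemma idr[simp]: "f \<in> hom C a b \<Longrightarrow> cmp C f (idm C a) = f"
  using cat[unfolded is_category_def, THEN conjunct2, THEN conjunct2, THEN conjunct2, THEN conjunct1, rule_format] by blast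
lemma assoc: "f \<in> hom C a b \<Longrightarrow> g \<in> hom C b c \<Longrightarrow> h \<in> hom C c d \<Longrightarrow>
        cmp C h (cmp C g f) = cmp C (cmp C h g) f"
  using cat[unfolded is_category_def, THEN conjunct2, THEN conjunct2, THEN conjunct2, THEN conjunct2, rule_format] by blast
lemma unt_obj[intro]: "unt C \<in> obj C" using sm[unfolded is_strict_monoidal_def, THEN conjunct2, THEN conjunct1, rule_format] by blast
lemma tns_obj[intro]: "a \<in> obj C \<Longrightarrow> b \<in> obj C \<Longrightarrow> tns C a b \<in> obj C"
  using sm[unfolded is_strict_monoidal_def, THEN conjunct2, THEN conjunct2, THEN conjunct1, rule_format] by blast
lemma tnsm_hom[intro]: "f \<in> hom C a b \<Longrightarrow> g \<in> hom C c d \<Longrightarrow> tnsm C f g \<in> hom C (tns C a c) (tns C b d)"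
  using sm[unfolded is_strict_monoidal_def, THEN conjunct2, THEN conjunct2, THEN conjunct2, THEN conjunct1, rule_format] by blast
lemma tnsm_id[simp]: "a \<in> obj C \<Longrightarrow> b \<in> obj C \<Longrightarrow> tnsm C (idm C a) (idm C b) = idm C (tns C a b)"
  using sm[unfolded is_strict_monoidal_def, THEN conjunct2, THEN conjunct2, THEN conjunct2, THEN conjunct2, THEN conjunct1, rule_format] by blast
lemma interchange: "f \<in> hom C a b \<Longrightarrow> f' \<in> hom C b c \<Longrightarrow>
        g \<in> hom C a' b' \<Longrightarrow> g' \<in> hom C b' c' \<Longrightarrow>
        tnsm C (cmp C f' f) (cmp C g' g) = cmp C (tnsm C f' g') (tnsm C f g)"
  using sm[unfolded is_strict_monoidal_def, THEN conjunct2, THEN conjunct2, THEN conjunct2, THEN conjunct2, THEN conjunct2, THEN conjunct1, rule_format] by blast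
lemma tns_unit[simp]: "a \<in> obj C \<Longrightarrow> tns C (unt C) a = a" "a \<in> obj C \<Longrightarrow> tns C a (unt C) = a"
  using sm[unfolded is_strict_monoidal_def, THEN conjunct2, THEN conjunct2, THEN conjunct2, THEN conjunct2, THEN conjunct2, THEN conjunct2, THEN conjunct2, THEN conjunct1, rule_format] by blast+

lemma iso_hom: "is_iso C f a b \<Longrightarrow> f \<in> hom C a b" unfolding is_iso_def by blast

lemma invm: assumes "is_iso C f a b"
  shows "invm C f a b \<in> hom C b a" "cmp C (invm C f a b) f = idm C a" "cmp C f (invm C f a b) = idm C b"
proof -
  have "\<exists>g. g \<in> hom C b a \<and> cmp C g f = idm C a \<and> cmp C f g = idm C b"
    using assms unfolding is_iso_def by blast
  from someI_ex[OF this] show "invm C f a b \<in> hom C b a" "cmp C (invm C f a b) f = idm C a" "cmp C f (invm C f a b) = idm C b"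
    unfolding invm_def by blast+
qed

lemma inv_iso: "is_iso C f a b \<Longrightarrow> is_iso C (invm C f a b) b a"
  unfolding is_iso_def[of C "invm C f a b"] using invm iso_hom by blast

lemma inv_unique: assumes "is_iso C f a b" "k \<in> hom C b a" "cmp C k f = idm C a"
  shows "invm C f a b = k"
proof -
  have f: "f \<in> hom C a b" using assms iso_hom by blast
  have "k = cmp C k (cmp C f (invm C f a b))" using invm(3)[OF assms(1)] assms(2) by simp
  also have "\<dots> = cmp C (cmp C k f) (invm C f a b)" using assoc[OF invm(1)[OF assms(1)] f assms(2)] .
  also have "\<dots> = invm C f a b" using assms(3) invm(1)[OF assms(1)] by simp
  finally show ?thesis by simp
qed

lemma iso_id: assumes "a \<in> obj C" shows "is_iso C (idm C a) a a"
  using id_hom[OF assms] idl[OF id_hom[OF assms]] unfolding is_iso_def by blast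

lemma cmp_inv_l: assumes "is_iso C f a b" "is_iso C g b c"
  shows "cmp C (cmp C (invm C f a b) (invm C g b c)) (cmp C g f) = idm C a"
proof -
  note f = iso_hom[OF assms(1)] and g = iso_hom[OF assms(2)]
  note fi = invm[OF assms(1)] and gi = invm[OF assms(2)]
  have gf: "cmp C g f \<in> hom C a c" by (rule cmp_hom[OF f g])
  have "cmp C (cmp C (invm C f a b) (invm C g b c)) (cmp C g f)
      = cmp C (invm C f a b) (cmp C (invm C g b c) (cmp C g f))"
    using assoc[OF gf gi(1) fi(1)] by simp
  also have "cmp C (invm C g b c) (cmp C g f) = f"
    using assoc[OF f g gi(1)] gi(2) idl[OF f] by simp
  finally show ?thesis using fi(2) by simp
qed

lemma cmp_inv_r: assumes "is_iso C f a b" "is_iso C g b c"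
  shows "cmp C (cmp C g f) (cmp C (invm C f a b) (invm C g b c)) = idm C c"
proof -
  note f = iso_hom[OF assms(1)] and g = iso_hom[OF assms(2)]
  note fi = invm[OF assms(1)] and gi = invm[OF assms(2)]
  have fgi: "cmp C (invm C f a b) (invm C g b c) \<in> hom C c a" by (rule cmp_hom[OF gi(1) fi(1)])
  have "cmp C (cmp C g f) (cmp C (invm C f a b) (invm C g b c))
      = cmp C g (cmp C f (cmp C (invm C f a b) (invm C g b c)))"
    using assoc[OF fgi f g] by simp
  also have "cmp C f (cmp C (invm C f a b) (invm C g b c)) = invm C g b c"
    using assoc[OF gi(1) fi(1) f] fi(3) idl[OF gi(1)] by simp
  finally show ?thesis using gi(3) by simp
qed

lemma iso_cmp: assumes "is_iso C f a b" "is_iso C g b c" shows "is_iso C (cmp C g f) a c"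
  unfolding is_iso_def
  using cmp_hom[OF iso_hom[OF assms(1)] iso_hom[OF assms(2)]]
    cmp_hom[OF invm(1)[OF assms(2)] invm(1)[OF assms(1)]] cmp_inv_l[OF assms] cmp_inv_r[OF assms] by blast

lemma inv_cmp: assumes "is_iso C f a b" "is_iso C g b c"
  shows "invm C (cmp C g f) a c = cmp C (invm C f a b) (invm C g b c)"
  by (rule inv_unique[OF iso_cmp[OF assms] cmp_hom[OF invm(1)[OF assms(2)] invm(1)[OF assms(1)]] cmp_inv_l[OF assms]])

lemma iso_tnsm: assumes "is_iso C f a b" "is_iso C g c d" shows "is_iso C (tnsm C f g) (tns C a c) (tns C b d)"
proof -
  note f = iso_hom[OF assms(1)] and g = iso_hom[OF assms(2)]
  note fi = invm[OF assms(1)] and gi = invm[OF assms(2)]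
  have a: "a \<in> obj C" "b \<in> obj C" using hom_obj[OF f] by auto
  have c: "c \<in> obj C" "d \<in> obj C" using hom_obj[OF g] by auto
  have 1: "cmp C (tnsm C (invm C f a b) (invm C g c d)) (tnsm C f g) = idm C (tns C a c)"
    using interchange[OF f fi(1) g gi(1)] fi(2) gi(2) tnsm_id[OF a(1) c(1)] by simp
  have 2: "cmp C (tnsm C f g) (tnsm C (invm C f a b) (invm C g c d)) = idm C (tns C b d)"
    using interchange[OF fi(1) f gi(1) g] fi(3) gi(3) tnsm_id[OF a(2) c(2)] by simp
  show ?thesis unfolding is_iso_def using tnsm_hom[OF f g] tnsm_hom[OF fi(1) gi(1)] 1 2 by blast
qed

lemma iso_cancel_r: assumes "is_iso C f a b" "x \<in> hom C b c" "y \<in> hom C b c" "cmp C x f = cmp C y f"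
  shows "x = y"
proof -
  note f = iso_hom[OF assms(1)] and fi = invm[OF assms(1)]
  have "x = cmp C x (cmp C f (invm C f a b))" using fi(3) idr[OF assms(2)] by simp
  also have "\<dots> = cmp C (cmp C x f) (invm C f a b)" using assoc[OF fi(1) f assms(2)] .
  also have "\<dots> = cmp C (cmp C y f) (invm C f a b)" using assms(4) by simp
  also have "\<dots> = cmp C y (cmp C f (invm C f a b))" using assoc[OF fi(1) f assms(3)] by simp
  also have "\<dots> = y" using fi(3) idr[OF assms(3)] by simp
  finally show ?thesis .
qed

lemma conj: assumes "is_iso C j a b" "is_iso C j' c d" "x \<in> hom C a c" "y \<in> hom C b d"
  "cmp C j' x = cmp C y j"
  shows "cmp C (invm C j' c d) y = cmp C x (invm C j a b)"
proof -
  note j = iso_hom[OF assms(1)] and j' = iso_hom[OF assms(2)]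
  note ji = invm[OF assms(1)] and j'i = invm[OF assms(2)]
  have "y = cmp C y (cmp C j (invm C j a b))" using ji(3) idr[OF assms(4)] by simp
  also have "\<dots> = cmp C (cmp C y j) (invm C j a b)" using assoc[OF ji(1) j assms(4)] .
  also have "\<dots> = cmp C (cmp C j' x) (invm C j a b)" using assms(5) by simp
  finally have y: "y = cmp C (cmp C j' x) (invm C j a b)" .
  have xji: "cmp C x (invm C j a b) \<in> hom C b c" by (rule cmp_hom[OF ji(1) assms(3)])
  have "cmp C (invm C j' c d) y = cmp C (invm C j' c d) (cmp C j' (cmp C x (invm C j a b)))"
    using y assoc[OF ji(1) assms(3) j'] by simp
  also have "\<dots> = cmp C (cmp C (invm C j' c d) j') (cmp C x (invm C j a b))"
    using assoc[OF xji j' j'i(1)] .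
  also have "\<dots> = cmp C x (invm C j a b)" using j'i(2) idl[OF xji] by simp
  finally show ?thesis .
qed

lemma functor_hom: assumes "is_functor C F Fm" shows "f \<in> hom C a b \<Longrightarrow> Fm f \<in> hom C (F a) (F b)"
  using assms[unfolded is_functor_def, THEN conjunct2, THEN conjunct1, rule_format] by blast
lemma functor_obj: assumes "is_functor C F Fm" shows "a \<in> obj C \<Longrightarrow> F a \<in> obj C"
  using assms[unfolded is_functor_def, THEN conjunct1, rule_format] by blast
lemma functor_id: assumes "is_functor C F Fm" shows "a \<in> obj C \<Longrightarrow> Fm (idm C a) = idm C (F a)"
  using assms[unfolded is_functor_def, THEN conjunct2, THEN conjunct2, THEN conjunct1, rule_format] by blast
lemma functor_cmp: assumes "is_functor C F Fm" shows "f \<in> hom C a b \<Longrightarrow> g \<in> hom C b c \<Longrightarrow> Fm (cmp C g f) = cmp C (Fm g) (Fm f)"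
  using assms[unfolded is_functor_def, THEN conjunct2, THEN conjunct2, THEN conjunct2, rule_format] by blast

lemma functor_iso: assumes F: "is_functor C F Fm" and i: "is_iso C f a b" shows "is_iso C (Fm f) (F a) (F b)"
proof -
  note f = iso_hom[OF i] and fi = invm[OF i]
  have a: "a \<in> obj C" "b \<in> obj C" using hom_obj[OF f] by auto
  have 1: "cmp C (Fm (invm C f a b)) (Fm f) = idm C (F a)"
    using functor_cmp[OF F f fi(1)] fi(2) functor_id[OF F a(1)] by simp
  have 2: "cmp C (Fm f) (Fm (invm C f a b)) = idm C (F b)"
    using functor_cmp[OF F fi(1) f] fi(3) functor_id[OF F a(2)] by simp
  show ?thesis unfolding is_iso_def using functor_hom[OF F f] functor_hom[OF F fi(1)] 1 2 by blast
qed

lemma functor_inv: assumes F: "is_functor C F Fm" and i: "is_iso C f a b"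
  shows "invm C (Fm f) (F a) (F b) = Fm (invm C f a b)"
proof -
  note f = iso_hom[OF i] and fi = invm[OF i]
  have a: "a \<in> obj C" using hom_obj[OF f] by auto
  have 1: "cmp C (Fm (invm C f a b)) (Fm f) = idm C (F a)"
    using functor_cmp[OF F f fi(1)] fi(2) functor_id[OF F a] by simp
  show ?thesis by (rule inv_unique[OF functor_iso[OF F i] functor_hom[OF F fi(1)] 1])
qed

end
locale act = smc C for C :: "('o, 'm, 'x) smcat_scheme" +
  fixes G :: "('g, 'y) monoid_scheme" and T Tm J J0 \<gamma> u
  assumes A: "is_action G C T Tm J J0 \<gamma> u"
begin

lemma grp: "group G" using A[unfolded is_action_def, THEN conjunct1, rule_format] by blast
lemma mcl[intro]: "g \<in> carrier G \<Longrightarrow> h \<in> carrier G \<Longrightarrow> g \<otimes>\<^bsub>G\<^esub> h \<in> carrier G"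
  by (rule monoid.m_closed[OF group.is_monoid[OF grp]])
lemma one[intro]: "\<one>\<^bsub>G\<^esub> \<in> carrier G"
  by (rule monoid.one_closed[OF group.is_monoid[OF grp]])

lemma mf: "g \<in> carrier G \<Longrightarrow> is_monoidal_functor C (T g) (Tm g) (J g) (J0 g)"
  using A[unfolded is_action_def, THEN conjunct2, THEN conjunct2, THEN conjunct1, rule_format, unfolded is_monoidal_autoequivalence_def, THEN conjunct1] by blast
lemma Tf: "g \<in> carrier G \<Longrightarrow> is_functor C (T g) (Tm g)"
  using mf[unfolded is_monoidal_functor_def, THEN conjunct1, rule_format] by blast
lemma J0iso: "g \<in> carrier G \<Longrightarrow> is_iso C (J0 g) (unt C) (T g (unt C))"
  using mf[unfolded is_monoidal_functor_def, THEN conjunct2, THEN conjunct2, THEN conjunct2, THEN conjunct2, THEN conjunct1, rule_format] by blast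
lemma Jiso: "g \<in> carrier G \<Longrightarrow> a \<in> obj C \<Longrightarrow> b \<in> obj C \<Longrightarrow>
   is_iso C (J g a b) (tns C (T g a) (T g b)) (T g (tns C a b))"
  using mf[unfolded is_monoidal_functor_def, THEN conjunct2, THEN conjunct1, rule_format] by blast
lemma Jnat: "g \<in> carrier G \<Longrightarrow> f \<in> hom C a a' \<Longrightarrow> k \<in> hom C b b' \<Longrightarrow>
   cmp C (J g a' b') (tnsm C (Tm g f) (Tm g k)) = cmp C (Tm g (tnsm C f k)) (J g a b)"
  using mf[unfolded is_monoidal_functor_def, THEN conjunct2, THEN conjunct2, THEN conjunct1, rule_format] by blast

lemma gmn: "g \<in> carrier G \<Longrightarrow> h \<in> carrier G \<Longrightarrow> is_monoidal_nat_iso C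
          (\<lambda>a. T g (T h a)) (\<lambda>f. Tm g (Tm h f))
          (\<lambda>a b. cmp C (Tm g (J h a b)) (J g (T h a) (T h b))) (cmp C (Tm g (J0 h)) (J0 g))
          (T (g \<otimes>\<^bsub>G\<^esub> h)) (Tm (g \<otimes>\<^bsub>G\<^esub> h)) (J (g \<otimes>\<^bsub>G\<^esub> h)) (J0 (g \<otimes>\<^bsub>G\<^esub> h))
          (\<gamma> g h)"
  using A[unfolded is_action_def, THEN conjunct2, THEN conjunct2, THEN conjunct2, THEN conjunct1, rule_format] by blast
lemma giso: "g \<in> carrier G \<Longrightarrow> h \<in> carrier G \<Longrightarrow> a \<in> obj C \<Longrightarrow>
   is_iso C (\<gamma> g h a) (T g (T h a)) (T (g \<otimes>\<^bsub>G\<^esub> h) a)"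
  using gmn[unfolded is_monoidal_nat_iso_def, THEN conjunct1, unfolded is_nat_iso_def, THEN conjunct2, rule_format] by blast
lemma ghom: "g \<in> carrier G \<Longrightarrow> h \<in> carrier G \<Longrightarrow> a \<in> obj C \<Longrightarrow>
   \<gamma> g h a \<in> hom C (T g (T h a)) (T (g \<otimes>\<^bsub>G\<^esub> h) a)"
  using giso iso_hom by blast
lemma gtns: "g \<in> carrier G \<Longrightarrow> h \<in> carrier G \<Longrightarrow> a \<in> obj C \<Longrightarrow> b \<in> obj C \<Longrightarrow>
   cmp C (\<gamma> g h (tns C a b)) (cmp C (Tm g (J h a b)) (J g (T h a) (T h b)))
   = cmp C (J (g \<otimes>\<^bsub>G\<^esub> h) a b) (tnsm C (\<gamma> g h a) (\<gamma> g h b))"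
  using gmn[unfolded is_monoidal_nat_iso_def, THEN conjunct2, THEN conjunct1, rule_format] by blast
lemma gunt: "g \<in> carrier G \<Longrightarrow> h \<in> carrier G \<Longrightarrow>
   cmp C (\<gamma> g h (unt C)) (cmp C (Tm g (J0 h)) (J0 g)) = J0 (g \<otimes>\<^bsub>G\<^esub> h)"
  using gmn[unfolded is_monoidal_nat_iso_def, THEN conjunct2, THEN conjunct2] by blast

lemma umn: "is_monoidal_nat_iso C
       (\<lambda>a. a) (\<lambda>f. f) (\<lambda>a b. idm C (tns C a b)) (idm C (unt C))
       (T \<one>\<^bsub>G\<^esub>) (Tm \<one>\<^bsub>G\<^esub>) (J \<one>\<^bsub>G\<^esub>) (J0 \<one>\<^bsub>G\<^esub>) u"
  using A[unfolded is_action_def, THEN conjunct2, THEN conjunct2, THEN conjunct2, THEN conjunct2, THEN conjunct1, rule_format] by blast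
lemma uhom: "a \<in> obj C \<Longrightarrow> u a \<in> hom C a (T \<one>\<^bsub>G\<^esub> a)"
  using umn[unfolded is_monoidal_nat_iso_def, THEN conjunct1, unfolded is_nat_iso_def, THEN conjunct1, unfolded is_nat_trans_def, THEN conjunct1, rule_format] by blast
lemma utns: "a \<in> obj C \<Longrightarrow> b \<in> obj C \<Longrightarrow>
   u (tns C a b) = cmp C (J \<one>\<^bsub>G\<^esub> a b) (tnsm C (u a) (u b))"
proof -
  assume a: "a \<in> obj C" and b: "b \<in> obj C"
  have "cmp C (u (tns C a b)) (idm C (tns C a b)) = cmp C (J \<one>\<^bsub>G\<^esub> a b) (tnsm C (u a) (u b))"
    using umn[unfolded is_monoidal_nat_iso_def, THEN conjunct2, THEN conjunct1, rule_format] a b by blast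
  then show ?thesis using idr[OF uhom[OF tns_obj[OF a b]]] by simp
qed
lemma uunt: "u (unt C) = J0 \<one>\<^bsub>G\<^esub>"
  using umn[unfolded is_monoidal_nat_iso_def, THEN conjunct2, THEN conjunct2] idr[OF uhom[OF unt_obj]] by simp

end
context act begin

lemma part_a:
  assumes X: "X \<in> obj C" and P: "is_partially_equivariant_object G C T Tm \<gamma> u X \<sigma>"
  shows "is_equivariant_object G C T Tm \<gamma> u X
     (\<lambda>g. cmp C (tnsm C (idm C X) (invm C (J0 g) (unt C) (T g (unt C)))) (\<sigma> g (unt C)))"
proof -
  define I where "I = unt C"
  have I: "I \<in> obj C" unfolding I_def by blast
  have XI: "tns C X I = X" unfolding I_def using X by simp
  define Ji where "Ji = (\<lambda>g. invm C (J0 g) I (T g I))"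
  define \<theta> where "\<theta> = (\<lambda>g. cmp C (tnsm C (idm C X) (Ji g)) (\<sigma> g I))"
  have J0i: "g \<in> carrier G \<Longrightarrow> is_iso C (J0 g) I (T g I)" for g using J0iso I_def by simp
  have J0h: "g \<in> carrier G \<Longrightarrow> J0 g \<in> hom C I (T g I)" for g using J0i iso_hom by blast
  have Jih: "g \<in> carrier G \<Longrightarrow> Ji g \<in> hom C (T g I) I" for g unfolding Ji_def using invm J0i by blast
  have JiJ: "g \<in> carrier G \<Longrightarrow> cmp C (Ji g) (J0 g) = idm C I" for g unfolding Ji_def using invm J0i by blast
  have Jiiso: "g \<in> carrier G \<Longrightarrow> is_iso C (Ji g) (T g I) I" for g unfolding Ji_def using inv_iso J0i by blast
  have TgI: "g \<in> carrier G \<Longrightarrow> T g I \<in> obj C" for g using functor_obj[OF Tf I] by blast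
  have sn: "g \<in> carrier G \<Longrightarrow> is_nat_iso C (\<lambda>Y. T g (tns C X Y)) (\<lambda>f. Tm g (tnsm C (idm C X) f))
          (\<lambda>Y. tns C X (T g Y)) (\<lambda>f. tnsm C (idm C X) (Tm g f)) (\<sigma> g)" for g
    using P[unfolded is_partially_equivariant_object_def, THEN conjunct1, rule_format] by blast
  have siso: "g \<in> carrier G \<Longrightarrow> Y \<in> obj C \<Longrightarrow> is_iso C (\<sigma> g Y) (T g (tns C X Y)) (tns C X (T g Y))" for g Y
    using sn[unfolded is_nat_iso_def, THEN conjunct2, rule_format] by blast
  have sh: "g \<in> carrier G \<Longrightarrow> Y \<in> obj C \<Longrightarrow> \<sigma> g Y \<in> hom C (T g (tns C X Y)) (tns C X (T g Y))" for g Y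
    using siso iso_hom by blast
  have snat: "g \<in> carrier G \<Longrightarrow> f \<in> hom C Y Y' \<Longrightarrow>
     cmp C (\<sigma> g Y') (Tm g (tnsm C (idm C X) f)) = cmp C (tnsm C (idm C X) (Tm g f)) (\<sigma> g Y)" for g f Y Y'
    using sn[unfolded is_nat_iso_def, THEN conjunct1, unfolded is_nat_trans_def, THEN conjunct2, rule_format] by blast
  have scoc: "g \<in> carrier G \<Longrightarrow> h \<in> carrier G \<Longrightarrow> Y \<in> obj C \<Longrightarrow>
        cmp C (\<sigma> (g \<otimes>\<^bsub>G\<^esub> h) Y) (\<gamma> g h (tns C X Y)) =
        cmp C (tnsm C (idm C X) (\<gamma> g h Y)) (cmp C (\<sigma> g (T h Y)) (Tm g (\<sigma> h Y)))" for g h Y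
    using P[unfolded is_partially_equivariant_object_def, THEN conjunct2, THEN conjunct1, rule_format] by blast
  have sunit: "cmp C (\<sigma> \<one>\<^bsub>G\<^esub> I) (u (tns C X I)) = tnsm C (idm C X) (u I)"
    using P[unfolded is_partially_equivariant_object_def, THEN conjunct2, THEN conjunct2, rule_format] I by blast
  have idX: "idm C X \<in> hom C X X" using X by blast
  have shI: "g \<in> carrier G \<Longrightarrow> \<sigma> g I \<in> hom C (T g X) (tns C X (T g I))" for g
    using sh[OF _ I, of g] XI by simp
  have XJ: "tnsm C (idm C X) (Ji k) \<in> hom C (tns C X (T k I)) X" if "k \<in> carrier G" for k
    using tnsm_hom[OF idX Jih[OF that]] XI by simp
  have th: "g \<in> carrier G \<Longrightarrow> \<theta> g \<in> hom C (T g X) X" for g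
    unfolding \<theta>_def using cmp_hom[OF shI XJ] by blast
  have thiso: "is_iso C (\<theta> g) (T g X) X" if g: "g \<in> carrier G" for g
  proof -
    have "is_iso C (\<theta> g) (T g (tns C X I)) (tns C X I)"
      unfolding \<theta>_def by (rule iso_cmp[OF siso[OF g I] iso_tnsm[OF iso_id[OF X] Jiiso[OF g]]])
    then show ?thesis using XI by simp
  qed
  have K: "cmp C (Ji (g \<otimes>\<^bsub>G\<^esub> h)) (\<gamma> g h I) = cmp C (Ji g) (Tm g (Ji h))"
    if g: "g \<in> carrier G" and h: "h \<in> carrier G" for g h
  proof -
    have K0: "is_iso C (cmp C (Tm g (J0 h)) (J0 g)) I (T g (T h I))"
      using iso_cmp[OF J0i[OF g] functor_iso[OF Tf[OF g] J0i[OF h]]] .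
    have gI: "\<gamma> g h I \<in> hom C (T g (T h I)) (T (g \<otimes>\<^bsub>G\<^esub> h) I)" using ghom[OF g h I] .
    have TJ0: "Tm g (J0 h) \<in> hom C (T g I) (T g (T h I))" using functor_hom[OF Tf[OF g] J0h[OF h]] .
    have TJi: "Tm g (Ji h) \<in> hom C (T g (T h I)) (T g I)" using functor_hom[OF Tf[OF g] Jih[OF h]] .
    have K0h: "cmp C (Tm g (J0 h)) (J0 g) \<in> hom C I (T g (T h I))" using iso_hom[OF K0] .
    have e1: "cmp C (cmp C (Ji (g \<otimes>\<^bsub>G\<^esub> h)) (\<gamma> g h I)) (cmp C (Tm g (J0 h)) (J0 g)) = idm C I"
      using assoc[OF K0h gI Jih[OF mcl[OF g h]]] gunt[OF g h, folded I_def] JiJ[OF mcl[OF g h]] by simp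
    have tt: "cmp C (Tm g (Ji h)) (Tm g (J0 h)) = idm C (T g I)"
      using functor_cmp[OF Tf[OF g] J0h[OF h] Jih[OF h]] JiJ[OF h] functor_id[OF Tf[OF g] I] by simp
    have e2: "cmp C (cmp C (Ji g) (Tm g (Ji h))) (cmp C (Tm g (J0 h)) (J0 g)) = idm C I"
    proof -
      have "cmp C (cmp C (Ji g) (Tm g (Ji h))) (cmp C (Tm g (J0 h)) (J0 g))
          = cmp C (Ji g) (cmp C (cmp C (Tm g (Ji h)) (Tm g (J0 h))) (J0 g))"
        using assoc[OF K0h TJi Jih[OF g]] assoc[OF J0h[OF g] TJ0 TJi] by simp
      also have "\<dots> = idm C I" using tt J0h[OF g] JiJ[OF g] by simp
      finally show ?thesis .
    qed
    show ?thesis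
      apply (rule iso_cancel_r[OF K0])
      using cmp_hom[OF gI Jih[OF mcl[OF g h]]] cmp_hom[OF TJi Jih[OF g]] e1 e2 by simp_all
  qed
  have eq: "(\<lambda>g. cmp C (tnsm C (idm C X) (invm C (J0 g) (unt C) (T g (unt C)))) (\<sigma> g (unt C))) = \<theta>"
    unfolding \<theta>_def Ji_def I_def ..
  show ?thesis
    unfolding eq is_equivariant_object_def
  proof (intro conjI ballI)
    fix g assume "g \<in> carrier G" then show "is_iso C (\<theta> g) (T g X) X" using thiso by blast
  next
    fix g h assume g: "g \<in> carrier G" and h: "h \<in> carrier G"
    have gh: "g \<otimes>\<^bsub>G\<^esub> h \<in> carrier G" using g h by blast
    have ThI: "T h I \<in> obj C" using TgI h by blast
    note gX = ghom[OF g h X]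
    have XTJ: "tnsm C (idm C X) (Tm g (Ji h)) \<in> hom C (tns C X (T g (T h I))) (tns C X (T g I))"
      using tnsm_hom[OF idX functor_hom[OF Tf[OF g] Jih[OF h]]] .
    have sgh: "\<sigma> g (T h I) \<in> hom C (T g (tns C X (T h I))) (tns C X (T g (T h I)))" using sh[OF g ThI] .
    have Tsh: "Tm g (\<sigma> h I) \<in> hom C (T g (T h X)) (T g (tns C X (T h I)))"
      using functor_hom[OF Tf[OF g] shI[OF h]] .
    have XgI: "tnsm C (idm C X) (\<gamma> g h I) \<in> hom C (tns C X (T g (T h I))) (tns C X (T (g \<otimes>\<^bsub>G\<^esub> h) I))"
      using tnsm_hom[OF idX ghom[OF g h I]] .
    have "cmp C (\<theta> (g \<otimes>\<^bsub>G\<^esub> h)) (\<gamma> g h X)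
        = cmp C (tnsm C (idm C X) (Ji (g \<otimes>\<^bsub>G\<^esub> h))) (cmp C (\<sigma> (g \<otimes>\<^bsub>G\<^esub> h) I) (\<gamma> g h (tns C X I)))"
      unfolding \<theta>_def using assoc[OF gX shI[OF gh] XJ[OF gh]] XI by simp
    also have "\<dots> = cmp C (tnsm C (idm C X) (Ji (g \<otimes>\<^bsub>G\<^esub> h)))
        (cmp C (tnsm C (idm C X) (\<gamma> g h I)) (cmp C (\<sigma> g (T h I)) (Tm g (\<sigma> h I))))"
      using scoc[OF g h I] by simp
    also have "\<dots> = cmp C (cmp C (tnsm C (idm C X) (Ji (g \<otimes>\<^bsub>G\<^esub> h))) (tnsm C (idm C X) (\<gamma> g h I)))
        (cmp C (\<sigma> g (T h I)) (Tm g (\<sigma> h I)))"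
      using assoc[OF cmp_hom[OF Tsh sgh] XgI XJ[OF gh]] by simp
    also have "cmp C (tnsm C (idm C X) (Ji (g \<otimes>\<^bsub>G\<^esub> h))) (tnsm C (idm C X) (\<gamma> g h I))
       = tnsm C (idm C X) (cmp C (Ji g) (Tm g (Ji h)))"
      using interchange[OF idX idX ghom[OF g h I] Jih[OF gh]] K[OF g h] idX by simp
    also have "\<dots> = cmp C (tnsm C (idm C X) (Ji g)) (tnsm C (idm C X) (Tm g (Ji h)))"
      using interchange[OF idX idX functor_hom[OF Tf[OF g] Jih[OF h]] Jih[OF g]] idX by simp
    also have "cmp C (cmp C (tnsm C (idm C X) (Ji g)) (tnsm C (idm C X) (Tm g (Ji h))))
        (cmp C (\<sigma> g (T h I)) (Tm g (\<sigma> h I)))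
      = cmp C (tnsm C (idm C X) (Ji g)) (cmp C (cmp C (tnsm C (idm C X) (Tm g (Ji h))) (\<sigma> g (T h I))) (Tm g (\<sigma> h I)))"
      using assoc[OF cmp_hom[OF Tsh sgh] XTJ XJ[OF g]] assoc[OF Tsh sgh XTJ] by simp
    also have "cmp C (tnsm C (idm C X) (Tm g (Ji h))) (\<sigma> g (T h I))
        = cmp C (\<sigma> g I) (Tm g (tnsm C (idm C X) (Ji h)))"
      using snat[OF g Jih[OF h]] by simp
    also have "cmp C (tnsm C (idm C X) (Ji g)) (cmp C (cmp C (\<sigma> g I) (Tm g (tnsm C (idm C X) (Ji h)))) (Tm g (\<sigma> h I)))
        = cmp C (tnsm C (idm C X) (Ji g)) (cmp C (\<sigma> g I) (cmp C (Tm g (tnsm C (idm C X) (Ji h))) (Tm g (\<sigma> h I))))"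
      using assoc[OF Tsh functor_hom[OF Tf[OF g] tnsm_hom[OF idX Jih[OF h]]] sh[OF g I]] by simp
    also have "cmp C (Tm g (tnsm C (idm C X) (Ji h))) (Tm g (\<sigma> h I)) = Tm g (\<theta> h)"
      unfolding \<theta>_def using functor_cmp[OF Tf[OF g] sh[OF h I] tnsm_hom[OF idX Jih[OF h]]] by simp
    also have "cmp C (tnsm C (idm C X) (Ji g)) (cmp C (\<sigma> g I) (Tm g (\<theta> h))) = cmp C (\<theta> g) (Tm g (\<theta> h))"
      using assoc[OF functor_hom[OF Tf[OF g] th[OF h]] shI[OF g] XJ[OF g]] by (simp add: \<theta>_def)
    finally show "cmp C (\<theta> (g \<otimes>\<^bsub>G\<^esub> h)) (\<gamma> g h X) = cmp C (\<theta> g) (Tm g (\<theta> h))" .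
  next
    have "cmp C (\<theta> \<one>\<^bsub>G\<^esub>) (u X) = cmp C (tnsm C (idm C X) (Ji \<one>\<^bsub>G\<^esub>)) (cmp C (\<sigma> \<one>\<^bsub>G\<^esub> I) (u (tns C X I)))"
      unfolding \<theta>_def using assoc[OF uhom[OF X] shI[OF one] XJ[OF one]] XI by simp
    also have "\<dots> = tnsm C (idm C X) (cmp C (Ji \<one>\<^bsub>G\<^esub>) (u I))"
      using sunit interchange[OF idX idX uhom[OF I] Jih[OF one]] idX by simp
    also have "\<dots> = idm C X" using uunt JiJ[OF one] I_def XI X I by simp
    finally show "cmp C (\<theta> \<one>\<^bsub>G\<^esub>) (u X) = idm C X" .
  qed
qed

end
context act begin

lemma part_b:
  assumes X: "X \<in> obj C" and E: "is_equivariant_object G C T Tm \<gamma> u X \<theta>"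
  shows "is_partially_equivariant_object G C T Tm \<gamma> u X
     (\<lambda>g Y. cmp C (tnsm C (\<theta> g) (idm C (T g Y))) (invm C (J g X Y) (tns C (T g X) (T g Y)) (T g (tns C X Y))))"
proof -
  define Ji where "Ji = (\<lambda>g a b. invm C (J g a b) (tns C (T g a) (T g b)) (T g (tns C a b)))"
  define \<sigma> where "\<sigma> = (\<lambda>g Y. cmp C (tnsm C (\<theta> g) (idm C (T g Y))) (Ji g X Y))"
  have thiso: "g \<in> carrier G \<Longrightarrow> is_iso C (\<theta> g) (T g X) X" for g
    using E[unfolded is_equivariant_object_def, THEN conjunct1, rule_format] by blast
  have th: "g \<in> carrier G \<Longrightarrow> \<theta> g \<in> hom C (T g X) X" for g using thiso iso_hom by blast
  have coc: "g \<in> carrier G \<Longrightarrow> h \<in> carrier G \<Longrightarrow>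
        cmp C (\<theta> (g \<otimes>\<^bsub>G\<^esub> h)) (\<gamma> g h X) = cmp C (\<theta> g) (Tm g (\<theta> h))" for g h
    using E[unfolded is_equivariant_object_def, THEN conjunct2, THEN conjunct1, rule_format] by blast
  have tunit: "cmp C (\<theta> \<one>\<^bsub>G\<^esub>) (u X) = idm C X"
    using E[unfolded is_equivariant_object_def, THEN conjunct2, THEN conjunct2, rule_format] by blast
  have idX: "idm C X \<in> hom C X X" using X by blast
  have TO: "g \<in> carrier G \<Longrightarrow> a \<in> obj C \<Longrightarrow> T g a \<in> obj C" for g a by (rule functor_obj[OF Tf])
  have Jh: "J g a b \<in> hom C (tns C (T g a) (T g b)) (T g (tns C a b))"
    if "g \<in> carrier G" "a \<in> obj C" "b \<in> obj C" for g a b using iso_hom[OF Jiso[OF that]] .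
  have Jii: "is_iso C (Ji g a b) (T g (tns C a b)) (tns C (T g a) (T g b))"
    if "g \<in> carrier G" "a \<in> obj C" "b \<in> obj C" for g a b
    unfolding Ji_def using inv_iso[OF Jiso[OF that]] .
  have Jih: "Ji g a b \<in> hom C (T g (tns C a b)) (tns C (T g a) (T g b))"
    if "g \<in> carrier G" "a \<in> obj C" "b \<in> obj C" for g a b using iso_hom[OF Jii[OF that]] .
  have JiJ: "cmp C (Ji g a b) (J g a b) = idm C (tns C (T g a) (T g b))"
    if "g \<in> carrier G" "a \<in> obj C" "b \<in> obj C" for g a b
    unfolding Ji_def using invm(2)[OF Jiso[OF that]] .
  have Jinat: "cmp C (Ji g a' b') (Tm g (tnsm C f k)) = cmp C (tnsm C (Tm g f) (Tm g k)) (Ji g a b)"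
    if g: "g \<in> carrier G" and f: "f \<in> hom C a a'" and k: "k \<in> hom C b b'" for g f k a a' b b'
    unfolding Ji_def
    by (rule conj[OF Jiso[OF g hom_obj1[OF f] hom_obj1[OF k]] Jiso[OF g hom_obj2[OF f] hom_obj2[OF k]]
       tnsm_hom[OF functor_hom[OF Tf[OF g] f] functor_hom[OF Tf[OF g] k]]
       functor_hom[OF Tf[OF g] tnsm_hom[OF f k]] Jnat[OF g f k]])
  have sh: "g \<in> carrier G \<Longrightarrow> Y \<in> obj C \<Longrightarrow> \<sigma> g Y \<in> hom C (T g (tns C X Y)) (tns C X (T g Y))" for g Y
    unfolding \<sigma>_def by (rule cmp_hom[OF Jih[OF _ X] tnsm_hom[OF th id_hom[OF TO]]])
  have siso: "g \<in> carrier G \<Longrightarrow> Y \<in> obj C \<Longrightarrow> is_iso C (\<sigma> g Y) (T g (tns C X Y)) (tns C X (T g Y))" for g Y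
    unfolding \<sigma>_def by (rule iso_cmp[OF Jii[OF _ X] iso_tnsm[OF thiso iso_id[OF TO]]])
  have eq: "(\<lambda>g Y. cmp C (tnsm C (\<theta> g) (idm C (T g Y))) (invm C (J g X Y) (tns C (T g X) (T g Y)) (T g (tns C X Y)))) = \<sigma>"
    unfolding \<sigma>_def Ji_def ..
  show ?thesis
    unfolding eq is_partially_equivariant_object_def
  proof (intro conjI ballI)
    fix g assume g: "g \<in> carrier G"
    show "is_nat_iso C (\<lambda>Y. T g (tns C X Y)) (\<lambda>f. Tm g (tnsm C (idm C X) f))
          (\<lambda>Y. tns C X (T g Y)) (\<lambda>f. tnsm C (idm C X) (Tm g f)) (\<sigma> g)"
      unfolding is_nat_iso_def is_nat_trans_def
    proof (intro conjI ballI allI impI)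
      fix Y assume "Y \<in> obj C"
      then show "\<sigma> g Y \<in> hom C (T g (tns C X Y)) (tns C X (T g Y))"
        "is_iso C (\<sigma> g Y) (T g (tns C X Y)) (tns C X (T g Y))" using sh siso g by auto
    next
      fix Y Y' f assume f: "f \<in> hom C Y Y'"
      have Y: "Y \<in> obj C" and Y': "Y' \<in> obj C" using f hom_obj by auto
      have Tf': "Tm g f \<in> hom C (T g Y) (T g Y')" using functor_hom[OF Tf[OF g] f] .
      have "cmp C (\<sigma> g Y') (Tm g (tnsm C (idm C X) f))
          = cmp C (tnsm C (\<theta> g) (idm C (T g Y'))) (cmp C (Ji g X Y') (Tm g (tnsm C (idm C X) f)))"
        unfolding \<sigma>_def
        using assoc[OF functor_hom[OF Tf[OF g] tnsm_hom[OF idX f]] Jih[OF g X Y'] tnsm_hom[OF th[OF g] id_hom[OF TO[OF g Y']]]] by simp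
      also have "\<dots> = cmp C (tnsm C (\<theta> g) (idm C (T g Y'))) (cmp C (tnsm C (idm C (T g X)) (Tm g f)) (Ji g X Y))"
        using Jinat[OF g idX f] functor_id[OF Tf[OF g] X] by simp
      also have "\<dots> = cmp C (cmp C (tnsm C (\<theta> g) (idm C (T g Y'))) (tnsm C (idm C (T g X)) (Tm g f))) (Ji g X Y)"
        using assoc[OF Jih[OF g X Y] tnsm_hom[OF id_hom[OF TO[OF g X]] Tf'] tnsm_hom[OF th[OF g] id_hom[OF TO[OF g Y']]]] .
      also have "cmp C (tnsm C (\<theta> g) (idm C (T g Y'))) (tnsm C (idm C (T g X)) (Tm g f)) = tnsm C (\<theta> g) (Tm g f)"
        using interchange[OF id_hom[OF TO[OF g X]] th[OF g] Tf' id_hom[OF TO[OF g Y']]] th[OF g] Tf' by simp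
      also have "tnsm C (\<theta> g) (Tm g f) = cmp C (tnsm C (idm C X) (Tm g f)) (tnsm C (\<theta> g) (idm C (T g Y)))"
        using interchange[OF th[OF g] idX id_hom[OF TO[OF g Y]] Tf'] th[OF g] Tf' by simp
      also have "cmp C (cmp C (tnsm C (idm C X) (Tm g f)) (tnsm C (\<theta> g) (idm C (T g Y)))) (Ji g X Y)
          = cmp C (tnsm C (idm C X) (Tm g f)) (\<sigma> g Y)"
        unfolding \<sigma>_def
        using assoc[OF Jih[OF g X Y] tnsm_hom[OF th[OF g] id_hom[OF TO[OF g Y]]] tnsm_hom[OF idX Tf']] by simp
      finally show "cmp C (\<sigma> g Y') (Tm g (tnsm C (idm C X) f)) = cmp C (tnsm C (idm C X) (Tm g f)) (\<sigma> g Y)" .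
    qed
  next
    fix g h Y assume g: "g \<in> carrier G" and h: "h \<in> carrier G" and Y: "Y \<in> obj C"
    have gh: "g \<otimes>\<^bsub>G\<^esub> h \<in> carrier G" using g h by blast
    have ThX: "T h X \<in> obj C" and ThY: "T h Y \<in> obj C" using TO h X Y by auto
    define R where "R = cmp C (Ji g (T h X) (T h Y)) (Tm g (Ji h X Y))"
    have Rh: "R \<in> hom C (T g (T h (tns C X Y))) (tns C (T g (T h X)) (T g (T h Y)))"
      unfolding R_def by (rule cmp_hom[OF functor_hom[OF Tf[OF g] Jih[OF h X Y]] Jih[OF g ThX ThY]])
    define K where "K = cmp C (Tm g (J h X Y)) (J g (T h X) (T h Y))"
    have Kiso: "is_iso C K (tns C (T g (T h X)) (T g (T h Y))) (T g (T h (tns C X Y)))"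
      unfolding K_def using iso_cmp[OF Jiso[OF g ThX ThY] functor_iso[OF Tf[OF g] Jiso[OF h X Y]]] .
    have RK: "invm C K (tns C (T g (T h X)) (T g (T h Y))) (T g (T h (tns C X Y))) = R"
      unfolding K_def R_def Ji_def
      using inv_cmp[OF Jiso[OF g ThX ThY] functor_iso[OF Tf[OF g] Jiso[OF h X Y]]]
        functor_inv[OF Tf[OF g] Jiso[OF h X Y]] by simp
    have gXY: "\<gamma> g h (tns C X Y) \<in> hom C (T g (T h (tns C X Y))) (T (g \<otimes>\<^bsub>G\<^esub> h) (tns C X Y))"
      using ghom[OF g h tns_obj[OF X Y]] .
    have gX: "\<gamma> g h X \<in> hom C (T g (T h X)) (T (g \<otimes>\<^bsub>G\<^esub> h) X)" using ghom[OF g h X] .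
    have gY: "\<gamma> g h Y \<in> hom C (T g (T h Y)) (T (g \<otimes>\<^bsub>G\<^esub> h) Y)" using ghom[OF g h Y] .
    have clA: "cmp C (Ji (g \<otimes>\<^bsub>G\<^esub> h) X Y) (\<gamma> g h (tns C X Y)) = cmp C (tnsm C (\<gamma> g h X) (\<gamma> g h Y)) R"
      unfolding RK[symmetric] Ji_def
      apply (rule conj[OF Kiso Jiso[OF gh X Y]])
      using tnsm_hom[OF gX gY] gXY gtns[OF g h X Y] unfolding K_def by auto
    have tgh: "\<theta> (g \<otimes>\<^bsub>G\<^esub> h) \<in> hom C (T (g \<otimes>\<^bsub>G\<^esub> h) X) X" using th[OF gh] .
    have Tth: "Tm g (\<theta> h) \<in> hom C (T g (T h X)) (T g X)" using functor_hom[OF Tf[OF g] th[OF h]] .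
    have iTghY: "idm C (T (g \<otimes>\<^bsub>G\<^esub> h) Y) \<in> hom C (T (g \<otimes>\<^bsub>G\<^esub> h) Y) (T (g \<otimes>\<^bsub>G\<^esub> h) Y)"
      using id_hom TO[OF gh Y] by blast
    have iTgThY: "idm C (T g (T h Y)) \<in> hom C (T g (T h Y)) (T g (T h Y))" using id_hom TO[OF g ThY] by blast
    have iThY: "idm C (T h Y) \<in> hom C (T h Y) (T h Y)" using id_hom ThY by blast
    have LHS: "cmp C (\<sigma> (g \<otimes>\<^bsub>G\<^esub> h) Y) (\<gamma> g h (tns C X Y))
        = cmp C (tnsm C (cmp C (\<theta> g) (Tm g (\<theta> h))) (\<gamma> g h Y)) R"
    proof -
      have "cmp C (\<sigma> (g \<otimes>\<^bsub>G\<^esub> h) Y) (\<gamma> g h (tns C X Y))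
          = cmp C (tnsm C (\<theta> (g \<otimes>\<^bsub>G\<^esub> h)) (idm C (T (g \<otimes>\<^bsub>G\<^esub> h) Y))) (cmp C (Ji (g \<otimes>\<^bsub>G\<^esub> h) X Y) (\<gamma> g h (tns C X Y)))"
        unfolding \<sigma>_def using assoc[OF gXY Jih[OF gh X Y] tnsm_hom[OF tgh iTghY]] by simp
      also have "\<dots> = cmp C (cmp C (tnsm C (\<theta> (g \<otimes>\<^bsub>G\<^esub> h)) (idm C (T (g \<otimes>\<^bsub>G\<^esub> h) Y))) (tnsm C (\<gamma> g h X) (\<gamma> g h Y))) R"
        unfolding clA using assoc[OF Rh tnsm_hom[OF gX gY] tnsm_hom[OF tgh iTghY]] .
      also have "cmp C (tnsm C (\<theta> (g \<otimes>\<^bsub>G\<^esub> h)) (idm C (T (g \<otimes>\<^bsub>G\<^esub> h) Y))) (tnsm C (\<gamma> g h X) (\<gamma> g h Y))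
          = tnsm C (cmp C (\<theta> g) (Tm g (\<theta> h))) (\<gamma> g h Y)"
        using interchange[OF gX tgh gY iTghY, symmetric] coc[OF g h] gY by simp
      finally show ?thesis .
    qed
    have RHS: "cmp C (tnsm C (idm C X) (\<gamma> g h Y)) (cmp C (\<sigma> g (T h Y)) (Tm g (\<sigma> h Y)))
        = cmp C (tnsm C (cmp C (\<theta> g) (Tm g (\<theta> h))) (\<gamma> g h Y)) R"
    proof -
      have Ts: "Tm g (\<sigma> h Y) = cmp C (Tm g (tnsm C (\<theta> h) (idm C (T h Y)))) (Tm g (Ji h X Y))"
        unfolding \<sigma>_def using functor_cmp[OF Tf[OF g] Jih[OF h X Y] tnsm_hom[OF th[OF h] iThY]] .
      have tthi: "tnsm C (\<theta> h) (idm C (T h Y)) \<in> hom C (tns C (T h X) (T h Y)) (tns C X (T h Y))"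
        using tnsm_hom[OF th[OF h] iThY] .
      have TJi: "Tm g (Ji h X Y) \<in> hom C (T g (T h (tns C X Y))) (T g (tns C (T h X) (T h Y)))"
        using functor_hom[OF Tf[OF g] Jih[OF h X Y]] .
      have Tt: "Tm g (tnsm C (\<theta> h) (idm C (T h Y))) \<in> hom C (T g (tns C (T h X) (T h Y))) (T g (tns C X (T h Y)))"
        using functor_hom[OF Tf[OF g] tthi] .
      have JiXh: "Ji g X (T h Y) \<in> hom C (T g (tns C X (T h Y))) (tns C (T g X) (T g (T h Y)))" using Jih[OF g X ThY] .
      have tg: "tnsm C (\<theta> g) (idm C (T g (T h Y))) \<in> hom C (tns C (T g X) (T g (T h Y))) (tns C X (T g (T h Y)))"
        using tnsm_hom[OF th[OF g] iTgThY] .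
      have nat: "cmp C (Ji g X (T h Y)) (Tm g (tnsm C (\<theta> h) (idm C (T h Y))))
          = cmp C (tnsm C (Tm g (\<theta> h)) (idm C (T g (T h Y)))) (Ji g (T h X) (T h Y))"
        using Jinat[OF g th[OF h] iThY] functor_id[OF Tf[OF g] ThY] by simp
      have Tth2: "tnsm C (Tm g (\<theta> h)) (idm C (T g (T h Y))) \<in> hom C (tns C (T g (T h X)) (T g (T h Y))) (tns C (T g X) (T g (T h Y)))"
        using tnsm_hom[OF Tth iTgThY] .
      have JiT: "Ji g (T h X) (T h Y) \<in> hom C (T g (tns C (T h X) (T h Y))) (tns C (T g (T h X)) (T g (T h Y)))"
        using Jih[OF g ThX ThY] .
      have sg: "\<sigma> g (T h Y) = cmp C (tnsm C (\<theta> g) (idm C (T g (T h Y)))) (Ji g X (T h Y))"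
        by (simp add: \<sigma>_def)
      have "cmp C (\<sigma> g (T h Y)) (Tm g (\<sigma> h Y))
          = cmp C (tnsm C (\<theta> g) (idm C (T g (T h Y)))) (cmp C (cmp C (Ji g X (T h Y)) (Tm g (tnsm C (\<theta> h) (idm C (T h Y))))) (Tm g (Ji h X Y)))"
        unfolding sg Ts using assoc[OF cmp_hom[OF TJi Tt] JiXh tg] assoc[OF TJi Tt JiXh] by simp
      also have "\<dots> = cmp C (tnsm C (\<theta> g) (idm C (T g (T h Y)))) (cmp C (tnsm C (Tm g (\<theta> h)) (idm C (T g (T h Y)))) R)"
        unfolding nat R_def using assoc[OF TJi JiT Tth2] by simp
      also have "\<dots> = cmp C (tnsm C (cmp C (\<theta> g) (Tm g (\<theta> h))) (idm C (T g (T h Y)))) R"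
        using assoc[OF Rh Tth2 tg] interchange[OF Tth th[OF g] iTgThY iTgThY] iTgThY by simp
      finally have s: "cmp C (\<sigma> g (T h Y)) (Tm g (\<sigma> h Y)) = cmp C (tnsm C (cmp C (\<theta> g) (Tm g (\<theta> h))) (idm C (T g (T h Y)))) R" .
      have c: "cmp C (\<theta> g) (Tm g (\<theta> h)) \<in> hom C (T g (T h X)) X" using Tth th[OF g] by blast
      show ?thesis unfolding s
        using assoc[OF Rh tnsm_hom[OF c iTgThY] tnsm_hom[OF idX gY]] interchange[OF c idX iTgThY gY] c gY by simp
    qed
    show "cmp C (\<sigma> (g \<otimes>\<^bsub>G\<^esub> h) Y) (\<gamma> g h (tns C X Y)) =
        cmp C (tnsm C (idm C X) (\<gamma> g h Y)) (cmp C (\<sigma> g (T h Y)) (Tm g (\<sigma> h Y)))"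
      using LHS RHS by simp
  next
    fix Y assume Y: "Y \<in> obj C"
    have uX: "u X \<in> hom C X (T \<one>\<^bsub>G\<^esub> X)" and uY: "u Y \<in> hom C Y (T \<one>\<^bsub>G\<^esub> Y)" using uhom X Y by auto
    have i1: "idm C (T \<one>\<^bsub>G\<^esub> Y) \<in> hom C (T \<one>\<^bsub>G\<^esub> Y) (T \<one>\<^bsub>G\<^esub> Y)" using id_hom TO[OF one Y] by blast
    have "cmp C (\<sigma> \<one>\<^bsub>G\<^esub> Y) (u (tns C X Y))
        = cmp C (tnsm C (\<theta> \<one>\<^bsub>G\<^esub>) (idm C (T \<one>\<^bsub>G\<^esub> Y))) (cmp C (cmp C (Ji \<one>\<^bsub>G\<^esub> X Y) (J \<one>\<^bsub>G\<^esub> X Y)) (tnsm C (u X) (u Y)))"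
      unfolding \<sigma>_def utns[OF X Y]
      using assoc[OF cmp_hom[OF tnsm_hom[OF uX uY] Jh[OF one X Y]] Jih[OF one X Y] tnsm_hom[OF th[OF one] i1]]
        assoc[OF tnsm_hom[OF uX uY] Jh[OF one X Y] Jih[OF one X Y]] by simp
    also have "\<dots> = cmp C (tnsm C (\<theta> \<one>\<^bsub>G\<^esub>) (idm C (T \<one>\<^bsub>G\<^esub> Y))) (tnsm C (u X) (u Y))"
      using JiJ[OF one X Y] tnsm_hom[OF uX uY] by simp
    also have "\<dots> = tnsm C (idm C X) (u Y)"
      using interchange[OF uX th[OF one] uY i1, symmetric] tunit uY by simp
    finally show "cmp C (\<sigma> \<one>\<^bsub>G\<^esub> Y) (u (tns C X Y)) = tnsm C (idm C X) (u Y)" .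
  qed
qed

end
theorem theorem6p4:
  fixes G :: "('g, 'y) monoid_scheme"
    and C :: "('o, 'm, 'x) smcat_scheme"
    and T :: "'g \<Rightarrow> 'o \<Rightarrow> 'o" and Tm :: "'g \<Rightarrow> 'm \<Rightarrow> 'm"
    and J :: "'g \<Rightarrow> 'o \<Rightarrow> 'o \<Rightarrow> 'm" and J0 :: "'g \<Rightarrow> 'm"
    and \<gamma> :: "'g \<Rightarrow> 'g \<Rightarrow> 'o \<Rightarrow> 'm" and u :: "'o \<Rightarrow> 'm"
    and X :: 'o
  assumes "is_action G C T Tm J J0 \<gamma> u"
    and "X \<in> obj C"
  shows "(\<forall>\<sigma>. is_partially_equivariant_object G C T Tm \<gamma> u X \<sigma> \<longrightarrow>
            (\<exists>\<theta>. is_equivariant_object G C T Tm \<gamma> u X \<theta>)) \<and>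
         (\<forall>\<theta>. is_equivariant_object G C T Tm \<gamma> u X \<theta> \<longrightarrow>
            (\<exists>\<sigma>. is_partially_equivariant_object G C T Tm \<gamma> u X \<sigma>))"
proof -
  interpret act C G T Tm J J0 \<gamma> u
  proof unfold_locales
    show "is_strict_monoidal C" using assms(1) unfolding is_action_def by (elim conjE) assumption
    show "is_action G C T Tm J J0 \<gamma> u" by (rule assms(1))
  qed
  show ?thesis
  proof (intro conjI allI impI)
    fix \<sigma> assume "is_partially_equivariant_object G C T Tm \<gamma> u X \<sigma>"
    from part_a[OF assms(2) this] show "\<exists>\<theta>. is_equivariant_object G C T Tm \<gamma> u X \<theta>" by blast
  next
    fix \<theta> assume "is_equivariant_object G C T Tm \<gamma> u X \<theta>"
    from part_b[OF assms(2) this] show "\<exists>\<sigma>. is_partially_equivariant_object G C T Tm \<gamma> u X \<sigma>" by blast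
  qed
qed

end
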